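(* Let $\epsilon\in(0,\epsilon_0)$ and let $\gamma$ be a unit-speed minimizer of $F$ in $\tilde Y_\epsilon$, parametrized as $\gamma=\{(1-\alpha(\theta)^2)^{1/2}(\cos\theta\,e_1+\sin\theta\,e_2)+\alpha(\theta)e_3:\theta\in\mathbb{S}^1\}$ and oriented so that $\theta$ increases. If $I$ is a (maximal open) interval of $\{\theta\in\mathbb{S}^1:\alpha(\theta)>\epsilon\}$ with $\mathcal{H}^1(I)<\pi$, then $\kappa\le\epsilon(1-\epsilon^2)^{-1/2}$ at some point of $\gamma$ whose $\theta$-coordinate lies in $I$.
   Context: $\mathbb{S}^1=\mathbb{R}/2\pi\mathbb{Z}$, $\mathbb{S}^2\subset\mathbb{R}^3$ the unit sphere, $e_1,e_2,e_3$ the standard basis; $\theta$ is the angular coordinate in cylindrical coordinates about the $e_3$ axis. For $\epsilon>0$, $\tilde Y_\epsilon:=\{\gamma\in W^{2,2}(\mathbb{S}^1;\mathbb{S}^2): \mathrm{Length}(\gamma)=2\pi,\ \gamma(\mathbb{S}^1)\subset\{x_3\ge\epsilon\}\}$. For a regular curve $\gamma$ on $\mathbb{S}^2$ the geodesic curvature is $\kappa=\frac{\gamma''\cdot(\gamma\times\gamma')}{|\gamma'|^3}$, and $F(\gamma):=\int\kappa^2\,ds_\gamma$. $\epsilon_0>0$ is a universal constant small enough that (as established in the paper) every unit-speed minimizer of $F$ in $\tilde Y_\epsilon$, $\epsilon<\epsilon_0$, admits such a parametrization with $\|\alpha\|_{C^{2,1}(\mathbb{S}^1)}\le C\epsilon$.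 $\mathcal{H}^1(I)$ is the length of $I$ in the $\theta$ variable. *)

theory Defs
  imports "HOL-Analysis.Analysis"
begin

text \<open>Curves on the unit sphere parametrized over S^1 = R / 2 pi Z are represented as
  2 pi-periodic functions real => real^3.\<close>

text \<open>W^{2,2}(S^1; R^3): 2pi-periodic, gamma is an indefinite integral of g, g an indefinite
  integral of h, and h square integrable over one period.\<close>
definition W22_loop :: "(real \<Rightarrow> real^3) \<Rightarrow> bool" where
  "W22_loop \<gamma> \<longleftrightarrow> (\<forall>t. \<gamma> (t + 2*pi) = \<gamma> t) \<and>
     (\<exists>g h. (\<forall>a b. a \<le> b \<longrightarrow>
                 (g has_integral (\<gamma> b - \<gamma> a)) {a..b} \<and> (h has_integral (g b - g a)) {a..b}) \<and>
            (\<lambda>t. norm (h t)^2) integrable_on {0..2*pi})"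

abbreviation vd :: "(real \<Rightarrow> real^3) \<Rightarrow> real \<Rightarrow> real^3" where
  "vd \<gamma> t \<equiv> vector_derivative \<gamma> (at t)"

definition kappa :: "(real \<Rightarrow> real^3) \<Rightarrow> real \<Rightarrow> real" where
  "kappa \<gamma> t = (vd (vd \<gamma>) t \<bullet> cross3 (\<gamma> t) (vd \<gamma> t)) / norm (vd \<gamma> t) ^ 3"

definition F :: "(real \<Rightarrow> real^3) \<Rightarrow> real" where
  "F \<gamma> = integral {0..2*pi} (\<lambda>t. (kappa \<gamma> t)^2 * norm (vd \<gamma> t))"

definition curve_length :: "(real \<Rightarrow> real^3) \<Rightarrow> real" where
  "curve_length \<gamma> = integral {0..2*pi} (\<lambda>t. norm (vd \<gamma> t))"

text \<open>tilde Y_epsilon (restricted to regular curves, on which F is defined)\<close>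
definition Ytilde :: "real \<Rightarrow> (real \<Rightarrow> real^3) set" where
  "Ytilde \<epsilon> = {\<gamma>. W22_loop \<gamma> \<and> (\<forall>t. norm (\<gamma> t) = 1) \<and> (\<forall>t. vd \<gamma> t \<noteq> 0) \<and>
                    curve_length \<gamma> = 2*pi \<and> (\<forall>t. \<gamma> t $ 3 \<ge> \<epsilon>)}"

definition circ_param :: "(real \<Rightarrow> real) \<Rightarrow> real \<Rightarrow> real^3" where
  "circ_param \<alpha> \<theta> = vector [sqrt (1 - (\<alpha> \<theta>)^2) * cos \<theta>, sqrt (1 - (\<alpha> \<theta>)^2) * sin \<theta>, \<alpha> \<theta>]"

end

theory Submission
  imports Defs
begin


lemma LDT_aux:
  fixes g h :: "real \<Rightarrow> 'a::euclidean_space"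
  assumes H: "\<And>a b. a \<le> b \<Longrightarrow> (h has_integral (g b - g a)) {a..b}"
  and eta: "eta > 0"
  shows "negligible {t. t \<in> {-n..n} \<and> (\<forall>d>0. \<exists>y. \<bar>y - t\<bar> < d \<and> norm (g y - g t - (y - t) *\<^sub>R h t) > eta * \<bar>y - t\<bar>)}"
    (is "negligible ?T")
proof (unfold negligible_outer_le, intro allI impI)
  fix e :: real assume e: "e > 0"
  have hint: "h integrable_on cbox (-n-1) (n+1)"
    using H[of "-n-1" "n+1"] by (cases "-n-1 \<le> n+1") (auto simp: integrable_on_def)
  obtain G where G: "gauge G"
    and Hen: "\<And>p. \<lbrakk>p tagged_partial_division_of (cbox (-n-1) (n+1)); G fine p\<rbrakk> \<Longrightarrow>
             sum (\<lambda>(x,k). norm(measure lborel k *\<^sub>R h x - integral k h)) p < e * eta"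
    using Henstock_lemma[OF hint, of "e*eta"] e eta by auto
  define K where "K = {(t,y). t \<in> ?T \<and> y \<noteq> t \<and> \<bar>y - t\<bar> < 1 \<and> {min t y..max t y} \<subseteq> G t
                      \<and> norm (g y - g t - (y - t) *\<^sub>R h t) > eta * \<bar>y - t\<bar>}"
  define a where "a = (\<lambda>(t::real,y::real). (t+y)/2)"
  define r where "r = (\<lambda>(t::real,y::real). \<bar>y-t\<bar>/2)"
  have cb: "cball (a i) (r i) = {min (fst i) (snd i)..max (fst i) (snd i)}" for i
    by (cases i) (auto simp: a_def r_def cball_eq_atLeastAtMost min_def max_def field_simps)
  have rpos: "\<And>i. i \<in> K \<Longrightarrow> 0 < r i" by (auto simp: K_def r_def)
  have cov: "\<exists>i. i \<in> K \<and> x \<in> cball (a i) (r i) \<and> r i < d" if x: "x \<in> ?T" and d: "0 < d" for x d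
  proof -
    obtain r0 where r0: "r0 > 0" "ball x r0 \<subseteq> G x"
      using G unfolding gauge_def by (meson open_contains_ball)
    define d' where "d' = min (min d 1) r0"
    have "d' > 0" using r0 d by (simp add: d'_def)
    then obtain y where y: "\<bar>y - x\<bar> < d'" "norm (g y - g x - (y - x) *\<^sub>R h x) > eta * \<bar>y - x\<bar>"
      using x by blast
    have yx: "y \<noteq> x" using y(2) by auto
    have "d' \<le> r0" by (simp add: d'_def)
    then have "{min x y..max x y} \<subseteq> ball x r0"
      using y(1) by (auto simp: dist_real_def min_def max_def)
    then have "(x,y) \<in> K" using r0 y yx x by (auto simp: K_def d'_def)
    moreover have "x \<in> cball (a (x,y)) (r (x,y))" by (subst cb) auto
    moreover have "r (x,y) < d" using y(1) d by (simp add: r_def d'_def)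
    ultimately show ?thesis by blast
  qed
  obtain C where C: "countable C" "C \<subseteq> K"
     "pairwise (\<lambda>i j. disjnt (cball (a i) (r i)) (cball (a j) (r j))) C"
     "negligible(?T - (\<Union>i \<in> C. cball (a i) (r i)))"
    by (rule Vitali_covering_theorem_cballs[of K r ?T a, OF rpos cov]) blast+
  have finbound: "(\<Sum>i\<in>F. 2 * r i) \<le> e" if F: "finite F" "F \<subseteq> C" for F
  proof -
    define p where "p = (\<lambda>i. (fst i, cball (a i) (r i))) ` F"
    have inj: "inj_on (\<lambda>i. (fst i, cball (a i) (r i))) F"
    proof (rule inj_onI)
      fix i j assume ij: "i \<in> F" "j \<in> F" "(fst i, cball (a i) (r i)) = (fst j, cball (a j) (r j))"
      show "i = j"
      proof (rule ccontr)
        assume "i \<noteq> j"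
        then have "disjnt (cball (a i) (r i)) (cball (a j) (r j))"
          using C(3) ij F unfolding pairwise_def by blast
        moreover have "r i > 0" using rpos ij F C by blast
        ultimately show False using ij(3) by (auto simp: disjnt_def)
      qed
    qed
    have Kmem: "i \<in> K" if "i \<in> F" for i using that F C by blast
    have ptd: "p tagged_partial_division_of (cbox (-n-1) (n+1))"
    proof -
      have "finite p" using F by (simp add: p_def)
      moreover have "x \<in> k \<and> k \<subseteq> cbox (-n-1) (n+1) \<and> (\<exists>a b. k = cbox a b)" if xk: "(x,k) \<in> p" for x k
      proof -
        obtain i where i: "i \<in> F" "x = fst i" "k = cball (a i) (r i)" using xk unfolding p_def by fastforce
        obtain t y where ty: "i = (t,y)" by (cases i)
        have "t \<in> ?T" "\<bar>y - t\<bar> < 1" using Kmem[OF i(1)] ty by (auto simp: K_def)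
        then show ?thesis using i ty cb[of i] by (auto simp: min_def max_def)
      qed
      moreover have "interior k1 \<inter> interior k2 = {}" if xk: "(x1,k1) \<in> p" "(x2,k2) \<in> p" "(x1,k1) \<noteq> (x2,k2)" for x1 k1 x2 k2
      proof -
        obtain i where i: "i \<in> F" "x1 = fst i" "k1 = cball (a i) (r i)" using xk unfolding p_def by fastforce
        obtain j where j: "j \<in> F" "x2 = fst j" "k2 = cball (a j) (r j)" using xk unfolding p_def by fastforce
        have "i \<noteq> j" using xk i j by auto
        then have "disjnt k1 k2" using C(3) i j F unfolding pairwise_def by blast
        then show ?thesis using interior_subset by (auto simp: disjnt_def)
      qed
      ultimately show ?thesis unfolding tagged_partial_division_of_def by blast
    qed
    have fine: "G fine p"
    proof -
      have "k \<subseteq> G x" if xk: "(x,k) \<in> p" for x k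
      proof -
        obtain i where i: "i \<in> F" "x = fst i" "k = cball (a i) (r i)" using xk unfolding p_def by fastforce
        obtain t y where ty: "i = (t,y)" by (cases i)
        show ?thesis using Kmem[OF i(1)] ty i cb[of i] by (auto simp: K_def)
      qed
      then show ?thesis by (auto simp: fine_def)
    qed
    have S: "sum (\<lambda>(x,k). norm(measure lborel k *\<^sub>R h x - integral k h)) p < e * eta"
      using Hen[OF ptd fine] .
    have trm: "eta * (2 * r i) < norm(measure lborel (cball (a i) (r i)) *\<^sub>R h (fst i) - integral (cball (a i) (r i)) h)"
      if "i \<in> F" for i
    proof -
      obtain t y where ty: "i = (t,y)" by (cases i)
      have K': "norm (g y - g t - (y - t) *\<^sub>R h t) > eta * \<bar>y - t\<bar>" using Kmem[OF that] ty by (auto simp: K_def)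
      have e1: "eta * (2 * r i) = eta * \<bar>y - t\<bar>" by (simp add: ty r_def)
      have "norm(measure lborel (cball (a i) (r i)) *\<^sub>R h (fst i) - integral (cball (a i) (r i)) h)
            = norm (g y - g t - (y - t) *\<^sub>R h t)"
      proof (cases "t \<le> y")
        case True
        have "integral {t..y} h = g y - g t" using H[OF True] by (simp add: integral_unique)
        moreover have "norm ((y - t) *\<^sub>R h t - (g y - g t)) = norm (g y - g t - (y - t) *\<^sub>R h t)"
          by (simp add: norm_minus_commute)
        ultimately show ?thesis using True cb[of i] ty by simp
      next
        case False
        then have "y \<le> t" by simp
        have c: "cball (a i) (r i) = {y..t}" using cb[of i] ty False by simp
        have I: "integral (cball (a i) (r i)) h = g t - g y" unfolding c using H[OF \<open>y \<le> t\<close>] by (simp add: integral_unique)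
        have M: "measure lborel (cball (a i) (r i)) = t - y" unfolding c using \<open>y \<le> t\<close> by simp
        have V: "(t - y) *\<^sub>R h t - (g t - g y) = g y - g t - (y - t) *\<^sub>R h t"
          by (simp add: algebra_simps)
        have ft: "fst i = t" using ty by simp
        show ?thesis unfolding I M ft V by (rule refl)
      qed
      then show ?thesis using K' e1 by (simp only:)
    qed
    have "eta * (\<Sum>i\<in>F. 2 * r i) = (\<Sum>i\<in>F. eta * (2 * r i))" by (simp add: sum_distrib_left)
    also have "\<dots> \<le> (\<Sum>i\<in>F. norm(measure lborel (cball (a i) (r i)) *\<^sub>R h (fst i) - integral (cball (a i) (r i)) h))"
      by (rule sum_mono) (use trm in force)
    also have "\<dots> = sum (\<lambda>(x,k). norm(measure lborel k *\<^sub>R h x - integral k h)) p"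
      unfolding p_def by (subst sum.reindex[OF inj]) (simp add: o_def)
    also have "\<dots> \<le> e * eta" using S by simp
    finally show ?thesis using eta by (simp add: mult.commute)
  qed
  define U where "U = \<Union>((\<lambda>i. cball (a i) (r i)) ` C)"
  have Umeas: "U \<in> lmeasurable \<and> measure lebesgue U \<le> e"
  proof (cases "C = {}")
    case True then show ?thesis using e by (simp add: U_def)
  next
    case False
    define f where "f = from_nat_into C"
    have rng: "range f = C" using False C(1) by (simp add: f_def)
    have Ueq: "U = (\<Union>k. cball (a (f k)) (r (f k)))" unfolding U_def by (simp add: rng[symmetric] image_comp)
    have B: "measure lebesgue (\<Union>k\<le>N. cball (a (f k)) (r (f k))) \<le> e" for N
    proof -
      have "measure lebesgue (\<Union>k\<le>N. cball (a (f k)) (r (f k))) = measure lebesgue (\<Union>i\<in>f ` {..N}. cball (a i) (r i))"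
        by (simp add: image_comp)
      also have "\<dots> \<le> (\<Sum>i\<in>f ` {..N}. measure lebesgue (cball (a i) (r i)))"
        by (rule measure_UNION_le) auto
      also have "\<dots> = (\<Sum>i\<in>f ` {..N}. 2 * r i)"
      proof (rule sum.cong[OF refl])
        fix i assume "i \<in> f ` {..N}"
        then have "r i > 0" using rng C(2) rpos by blast
        then show "measure lebesgue (cball (a i) (r i)) = 2 * r i"
          by (simp add: cball_eq_atLeastAtMost)
      qed
      also have "\<dots> \<le> e" using rng by (intro finbound) auto
      finally show ?thesis .
    qed
    show ?thesis unfolding Ueq
      using fmeasurable_countable_Union[of "\<lambda>k. cball (a (f k)) (r (f k))" lebesgue e, OF _ B]
        measure_countable_Union_le[of "\<lambda>k. cball (a (f k)) (r (f k))" lebesgue e, OF _ B] by auto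
  qed
  define V where "V = (?T - U) \<union> U"
  have negV: "negligible (?T - U)" using C(4) by (simp add: U_def)
  have "?T \<subseteq> V" by (auto simp: V_def)
  moreover have "V \<in> lmeasurable" unfolding V_def using negV Umeas
    by (intro fmeasurable.Un) (auto intro: negligible_imp_measurable)
  moreover have "measure lebesgue V \<le> e"
  proof -
    have "measure lebesgue V \<le> measure lebesgue (?T - U) + measure lebesgue U"
      unfolding V_def by (rule measure_Un_le) (use negV Umeas negligible_imp_measurable in auto)
    then show ?thesis using negV Umeas negligible_imp_measure0 by fastforce
  qed
  ultimately show "\<exists>T. ?T \<subseteq> T \<and> T \<in> lmeasurable \<and> measure lebesgue T \<le> e" by blast
qed



lemma LDT:
  fixes g h :: "real \<Rightarrow> 'a::euclidean_space"
  assumes H: "\<And>a b. a \<le> b \<Longrightarrow> (h has_integral (g b - g a)) {a..b}"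
  shows "negligible {t. \<not> (g has_vector_derivative h t) (at t)}"
proof -
  define S where "S = (\<lambda>(n::nat) (m::nat). {t. t \<in> {-real n..real n} \<and> (\<forall>d>0. \<exists>y. \<bar>y - t\<bar> < d \<and>
      norm (g y - g t - (y - t) *\<^sub>R h t) > (1 / real (Suc m)) * \<bar>y - t\<bar>)})"
  have negS: "negligible (S n m)" for n m
    unfolding S_def by (rule LDT_aux) (use H in auto)
  have sub: "{t. \<not> (g has_vector_derivative h t) (at t)} \<subseteq> (\<Union>n. \<Union>m. S n m)"
  proof
    fix t assume t: "t \<in> {t. \<not> (g has_vector_derivative h t) (at t)}"
    obtain n :: nat where n: "\<bar>t\<bar> \<le> real n" using real_arch_simple by blast
    show "t \<in> (\<Union>n. \<Union>m. S n m)"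
    proof (rule ccontr)
      assume "t \<notin> (\<Union>n. \<Union>m. S n m)"
      then have nt: "\<And>m. t \<notin> S n m" by blast
      have "(g has_derivative (\<lambda>x. x *\<^sub>R h t)) (at t)"
        unfolding has_derivative_at_alt
      proof (intro conjI allI impI)
        show "bounded_linear (\<lambda>x. x *\<^sub>R h t)" by (rule bounded_linear_scaleR_left)
        fix e :: real assume e: "e > 0"
        obtain m :: nat where m: "1 / real (Suc m) < e"
          using e by (metis nat_approx_posE)
        have "t \<in> {-real n..real n}" using n by auto
        then obtain d where d: "d > 0" "\<And>y. \<bar>y - t\<bar> < d \<Longrightarrow> norm (g y - g t - (y - t) *\<^sub>R h t) \<le> (1 / real (Suc m)) * \<bar>y - t\<bar>"
        proof -
          from nt[of m] \<open>t \<in> {-real n..real n}\<close> obtain d where "d > 0" "\<forall>y. \<bar>y - t\<bar> < d \<longrightarrow> \<not> norm (g y - g t - (y - t) *\<^sub>R h t) > (1 / real (Suc m)) * \<bar>y - t\<bar>"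
            unfolding S_def by blast
          then show ?thesis using that by (meson not_less)
        qed
        show "\<exists>d>0. \<forall>y. norm (y - t) < d \<longrightarrow> norm (g y - g t - (y - t) *\<^sub>R h t) \<le> e * norm (y - t)"
        proof (intro exI conjI allI impI)
          fix y assume "norm (y - t) < d"
          then have "norm (g y - g t - (y - t) *\<^sub>R h t) \<le> (1 / real (Suc m)) * \<bar>y - t\<bar>" using d by simp
          also have "\<dots> \<le> e * norm (y - t)" using mult_right_mono[OF less_imp_le[OF m], of "\<bar>y - t\<bar>"] by simp
          finally show "norm (g y - g t - (y - t) *\<^sub>R h t) \<le> e * norm (y - t)" .
        qed (use d in auto)
      qed
      then show False using t by (simp add: has_vector_derivative_def)
    qed
  qed
  have "negligible (\<Union>n. \<Union>m. S n m)"
    by (intro negligible_countable_Union) (auto intro: negS)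
  then show ?thesis using sub negligible_subset by blast
qed



lemma frame_decomp:
  fixes a b x :: "real^3"
  assumes "norm a = 1" "norm b = 1" "a \<bullet> b = 0"
  shows "x = (x \<bullet> a) *\<^sub>R a + (x \<bullet> b) *\<^sub>R b + (x \<bullet> cross3 a b) *\<^sub>R cross3 a b"
proof -
  have a: "a$1*a$1 + a$2*a$2 + a$3*a$3 = 1" using assms(1)
    by (simp add: norm_eq_1 inner_vec_def sum_3)
  have b: "b$1*b$1 + b$2*b$2 + b$3*b$3 = 1" using assms(2)
    by (simp add: norm_eq_1 inner_vec_def sum_3)
  have ab: "a$1*b$1 + a$2*b$2 + a$3*b$3 = 0" using assms(3)
    by (simp add: inner_vec_def sum_3)
  show ?thesis
    unfolding vec_eq_iff forall_3
    using a b ab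
    apply (simp add: inner_vec_def sum_3 cross3_simps)
    apply (intro conjI)
    apply algebra+
    done
qed

lemma frame_norm:
  fixes a b x :: "real^3"
  assumes "norm a = 1" "norm b = 1" "a \<bullet> b = 0"
  shows "x \<bullet> x = (x \<bullet> a)^2 + (x \<bullet> b)^2 + (x \<bullet> cross3 a b)^2"
proof -
  have "x \<bullet> x = x \<bullet> ((x \<bullet> a) *\<^sub>R a + (x \<bullet> b) *\<^sub>R b + (x \<bullet> cross3 a b) *\<^sub>R cross3 a b)"
    using frame_decomp[OF assms, of x] by simp
  then show ?thesis by (simp add: inner_add_right power2_eq_square)
qed

lemma ind_cont:
  fixes F f :: "real \<Rightarrow> 'a::euclidean_space"
  assumes H: "\<And>a b. a \<le> b \<Longrightarrow> (f has_integral (F b - F a)) {a..b}"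
  shows "continuous_on UNIV F"
proof -
  have "isCont F x" for x
  proof -
    have int: "f integrable_on {x-1..x+1}" using H[of "x-1" "x+1"] by (auto simp: integrable_on_def)
    have c1: "continuous_on {x-1..x+1} (\<lambda>y. F (x-1) + integral {x-1..y} f)"
      by (intro continuous_intros indefinite_integral_continuous_1 int)
    have "continuous_on {x-1..x+1} F"
    proof (rule continuous_on_cong[THEN iffD1, OF refl _ c1])
      fix y assume "y \<in> {x-1..x+1}"
      then have "integral {x-1..y} f = F y - F (x-1)" using H[of "x-1" y] by (simp add: integral_unique)
      then show "F (x - 1) + integral {x - 1..y} f = F y" by simp
    qed
    then show ?thesis by (rule continuous_on_interior) auto
  qed
  then show ?thesis by (simp add: continuous_at_imp_continuous_on)
qed

lemma ind_deriv:
  fixes F f :: "real \<Rightarrow> 'a::euclidean_space"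
  assumes H: "\<And>a b. a \<le> b \<Longrightarrow> (f has_integral (F b - F a)) {a..b}"
    and fc: "continuous_on UNIV f"
  shows "(F has_vector_derivative f x) (at x)"
proof -
  have "((\<lambda>u. integral {x-1..u} f) has_vector_derivative f x) (at x within {x-1..x+1})"
    by (rule integral_has_vector_derivative) (use fc continuous_on_subset in auto)
  then have "((\<lambda>u. F (x-1) + integral {x-1..u} f) has_vector_derivative f x) (at x within {x-1..x+1})"
    by (intro derivative_eq_intros) auto
  then have "(F has_vector_derivative f x) (at x within {x-1..x+1})"
  proof (rule has_vector_derivative_transform_within[where d=1])
    fix y assume "y \<in> {x-1..x+1}" "dist y x < 1"
    then have "integral {x-1..y} f = F y - F (x-1)" using H[of "x-1" y] by (simp add: integral_unique)
    then show "F (x - 1) + integral {x - 1..y} f = F y" by simp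
  qed auto
  then show ?thesis by (simp add: at_within_Icc_at)
qed

lemma vd_inner:
  fixes f :: "real \<Rightarrow> 'a::real_inner"
  assumes "(f has_vector_derivative f') (at x)"
  shows "((\<lambda>s. f s \<bullet> k) has_real_derivative (f' \<bullet> k)) (at x)"
proof -
  have "((\<lambda>s. f s \<bullet> k) has_derivative (\<lambda>t. (t *\<^sub>R f') \<bullet> k)) (at x)"
    using bounded_linear.has_derivative[OF bounded_linear_inner_left assms[unfolded has_vector_derivative_def]] .
  moreover have "(\<lambda>t. (t *\<^sub>R f') \<bullet> k) = (*) (f' \<bullet> k)" by (auto simp: fun_eq_iff)
  ultimately show ?thesis by (simp add: has_field_derivative_def)
qed

lemma vd_inner2:
  fixes f k :: "real \<Rightarrow> 'a::real_inner"
  assumes "(f has_vector_derivative f') (at x)" "(k has_vector_derivative k') (at x)"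
  shows "((\<lambda>s. f s \<bullet> k s) has_real_derivative (f' \<bullet> k x + f x \<bullet> k')) (at x)"
proof -
  have "((\<lambda>s. f s \<bullet> k s) has_derivative (\<lambda>t. f x \<bullet> (t *\<^sub>R k') + (t *\<^sub>R f') \<bullet> k x)) (at x)"
    using has_derivative_inner[OF assms(1)[unfolded has_vector_derivative_def] assms(2)[unfolded has_vector_derivative_def]] .
  moreover have "(\<lambda>t. f x \<bullet> (t *\<^sub>R k') + (t *\<^sub>R f') \<bullet> k x) = (*) (f' \<bullet> k x + f x \<bullet> k')"
    by (auto simp: fun_eq_iff algebra_simps)
  ultimately show ?thesis by (simp add: has_field_derivative_def)
qed

lemma right_above:
  fixes f :: "real \<Rightarrow> real"
  assumes "isCont f x" "f x > c" "d > 0"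
  shows "\<exists>y. x < y \<and> y \<le> x + d \<and> f y > c"
proof -
  obtain e where e: "e > 0" "\<And>y. dist y x < e \<Longrightarrow> dist (f y) (f x) < f x - c"
    using assms(1,2) unfolding continuous_at_eps_delta by (metis diff_gt_0_iff_gt)
  define y where "y = x + min d (e/2)"
  have "dist y x < e" using e assms by (simp add: y_def dist_real_def)
  then have "\<bar>f y - f x\<bar> < f x - c" using e(2)[OF \<open>dist y x < e\<close>] by (simp add: dist_real_def)
  then have "f y > c" by (auto simp: abs_less_iff)
  moreover have "x < y" "y \<le> x + d" using e assms by (auto simp: y_def)
  ultimately show ?thesis by blast
qed



lemma cont_small:
  fixes f :: "real \<Rightarrow> real"
  assumes "isCont f x" "e > 0"
  obtains d where "d > 0" "\<And>y. \<bar>y - x\<bar> < d \<Longrightarrow> \<bar>f y - f x\<bar> < e"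
  using assms unfolding continuous_at_eps_delta dist_real_def by blast

lemma azim:
  fixes X Y R ph :: "real \<Rightarrow> real"
  assumes X: "\<And>s. X s = R s * cos (ph s)" and Y: "\<And>s. Y s = R s * sin (ph s)"
    and R: "\<And>s. R s \<ge> 0" and pc: "isCont ph s0" and pm: "strict_mono ph"
    and dX: "(X has_real_derivative X') (at s0)" and dY: "(Y has_real_derivative Y') (at s0)"
  shows "X s0 * Y' - Y s0 * X' \<ge> 0"
proof (rule ccontr)
  assume neg: "\<not> ?thesis"
  define P where "P = (\<lambda>s. X s0 * Y s - Y s0 * X s)"
  have dP: "(P has_real_derivative (X s0 * Y' - Y s0 * X')) (at s0)"
    unfolding P_def by (rule DERIV_diff[OF DERIV_cmult[OF dY] DERIV_cmult[OF dX]])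
  obtain d' where d': "d' > 0" "\<And>h. h > 0 \<Longrightarrow> h < d' \<Longrightarrow> P s0 > P (s0 + h)"
    using DERIV_neg_dec_right[OF dP] neg by force
  obtain d where d: "d > 0" "\<And>y. \<bar>y - s0\<bar> < d \<Longrightarrow> \<bar>ph y - ph s0\<bar> < pi"
    using cont_small[OF pc pi_gt_zero] by blast
  define hh where "hh = min d d' / 2"
  have hh: "hh > 0" "hh < d'" "hh < d" using d d' by (auto simp: hh_def)
  have P0: "P s0 = 0" by (simp add: P_def mult.commute)
  have "ph (s0 + hh) > ph s0" using pm hh by (simp add: strict_mono_less)
  moreover have "ph (s0 + hh) - ph s0 < pi" using d(2)[of "s0 + hh"] hh by simp
  ultimately have "sin (ph (s0 + hh) - ph s0) > 0" by (intro sin_gt_zero) auto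
  moreover have "P (s0 + hh) = R s0 * R (s0 + hh) * sin (ph (s0 + hh) - ph s0)"
    unfolding P_def X Y sin_diff by (simp add: algebra_simps)
  ultimately have "P (s0 + hh) \<ge> 0" using R by simp
  then show False using d'(2)[OF hh(1) hh(2)] P0 by simp
qed

lemma no_pole:
  fixes X Y R ph :: "real \<Rightarrow> real"
  assumes X: "\<And>s. X s = R s * cos (ph s)" and Y: "\<And>s. Y s = R s * sin (ph s)"
    and R: "\<And>s. R s \<ge> 0" and pc: "isCont ph s0" and R0: "R s0 = 0"
    and dX: "(X has_real_derivative X') (at s0)" and dY: "(Y has_real_derivative Y') (at s0)"
  shows "X' = 0 \<and> Y' = 0"
proof -
  obtain d where d: "d > 0" "\<And>y. \<bar>y - s0\<bar> < d \<Longrightarrow> \<bar>ph y - ph s0\<bar> < pi/4"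
  proof -
    have "pi/4 > (0::real)" by simp
    from cont_small[OF pc this] show ?thesis using that by blast
  qed
  have key: "X' * cos (ph s0 + be) + Y' * sin (ph s0 + be) = 0" if be: "0 \<le> be" "be \<le> pi/4" for be
  proof -
    define q where "q = (\<lambda>s. X s * cos (ph s0 + be) + Y s * sin (ph s0 + be))"
    have dq: "(q has_real_derivative (X' * cos (ph s0 + be) + Y' * sin (ph s0 + be))) (at s0)"
      unfolding q_def by (rule DERIV_add[OF DERIV_cmult_right[OF dX] DERIV_cmult_right[OF dY]])
    have qeq: "q s = R s * cos (ph s - (ph s0 + be))" for s
      unfolding q_def X Y cos_diff by (simp add: algebra_simps)
    have "q s0 \<le> q y" if "\<bar>s0 - y\<bar> < d" for y
    proof -
      have "\<bar>ph y - ph s0\<bar> < pi/4" using d(2)[of y] that by simp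
      then have "-(pi/4) < ph y - ph s0" "ph y - ph s0 < pi/4" by linarith+
      then have "cos (ph y - (ph s0 + be)) > 0" using be pi_gt_zero by (intro cos_gt_zero_pi) linarith+
      then show ?thesis using R[of y] R0 by (simp add: qeq)
    qed
    then show ?thesis using DERIV_local_min[OF dq d(1)] by blast
  qed
  have k0: "X' * cos (ph s0) + Y' * sin (ph s0) = 0" using key[of 0] by simp
  have k1: "X' * cos (ph s0 + pi/4) + Y' * sin (ph s0 + pi/4) = 0" using key[of "pi/4"] by simp
  then have "(sqrt 2 / 2) * (X' * (cos (ph s0) - sin (ph s0)) + Y' * (sin (ph s0) + cos (ph s0))) = 0"
    by (simp add: cos_add sin_add cos_45 sin_45 algebra_simps)
  then have k2: "X' * (cos (ph s0) - sin (ph s0)) + Y' * (sin (ph s0) + cos (ph s0)) = 0" by simp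
  have sc: "sin (ph s0)^2 + cos (ph s0)^2 = 1" by simp
  have x0: "X' = 0" using k0 k2 sc by algebra
  have y0: "Y' = 0" using k0 k2 sc by algebra
  show ?thesis using x0 y0 by simp
qed

lemma ph_shift:
  fixes ph :: "real \<Rightarrow> real"
  assumes per: "\<And>s. ph (s + 2*pi) = ph s + 2*pi"
  shows "ph (s + 2*pi*real n) = ph s + 2*pi*real n \<and> ph (s - 2*pi*real n) = ph s - 2*pi*real n"
proof (induction n)
  case 0 then show ?case by simp
next
  case (Suc n)
  have 1: "ph (s + 2*pi*real (Suc n)) = ph (s + 2*pi*real n) + 2*pi"
    using per[of "s + 2*pi*real n"] by (simp add: algebra_simps)
  have 2: "ph (s - 2*pi*real n) = ph (s - 2*pi*real (Suc n)) + 2*pi"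
    using per[of "s - 2*pi*real (Suc n)"] by (simp add: algebra_simps)
  show ?case using Suc 1 2 by (simp add: algebra_simps)
qed

lemma ph_onto:
  fixes ph :: "real \<Rightarrow> real"
  assumes pc: "continuous_on UNIV ph" and per: "\<And>s. ph (s + 2*pi) = ph s + 2*pi"
  shows "\<exists>s. ph s = y"
proof -
  obtain n :: nat where n: "\<bar>y - ph 0\<bar> / (2*pi) \<le> real n" using real_arch_simple by blast
  then have n': "\<bar>y - ph 0\<bar> \<le> 2*pi*real n" using pi_gt_zero by (simp add: field_simps)
  have "ph (0 - 2*pi*real n) \<le> y" "y \<le> ph (0 + 2*pi*real n)"
    using ph_shift[where ph=ph and s=0 and n=n, OF per] n' by auto
  moreover have "0 - 2*pi*real n \<le> 0 + 2*pi*real n" by simp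
  ultimately show ?thesis using IVT'[of ph "0 - 2*pi*real n" y "0 + 2*pi*real n"] pc
    by (meson continuous_on_subset subset_UNIV)
qed



lemma main:
  fixes gam :: "real \<Rightarrow> real^3" and alp ph :: "real \<Rightarrow> real" and a b eps :: real
  assumes eps: "0 < eps" "eps < 1"
    and Y: "gam \<in> Ytilde eps"
    and unit: "\<forall>t. norm (vd gam t) = 1"
    and phc: "continuous_on UNIV ph" and phm: "strict_mono ph" and php: "\<forall>s. ph (s + 2*pi) = ph s + 2*pi"
    and par: "\<forall>s. gam s = circ_param alp (ph s)"
    and ab: "a < b" "b - a < pi" "\<forall>\<theta>\<in>{a<..<b}. alp \<theta> > eps" "\<not> alp a > eps" "\<not> alp b > eps"
  shows "\<exists>s. ph s \<in> {a<..<b} \<and> vd gam differentiable (at s) \<and> kappa gam s \<le> eps / sqrt (1 - eps^2)"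
proof -
  have W: "W22_loop gam" and sph: "\<And>t. norm (gam t) = 1" and third: "\<And>t. gam t $ 3 \<ge> eps"
    using Y by (auto simp: Ytilde_def)
  obtain g h where GH: "\<forall>a b. a \<le> b \<longrightarrow> (g has_integral (gam b - gam a)) {a..b} \<and> (h has_integral (g b - g a)) {a..b}"
    using W unfolding W22_loop_def by blast
  have Hh: "\<And>a b. a \<le> b \<Longrightarrow> (h has_integral (g b - g a)) {a..b}" using GH by blast
  have Hg: "\<And>a b. a \<le> b \<Longrightarrow> (g has_integral (gam b - gam a)) {a..b}" using GH by blast
  have gc: "continuous_on UNIV g" by (rule ind_cont[OF Hh])
  have gamc: "continuous_on UNIV gam" by (rule ind_cont[OF Hg])
  have dgam: "\<And>t. (gam has_vector_derivative g t) (at t)" by (rule ind_deriv[OF Hg gc])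
  have vdg: "vd gam = g" using dgam vector_derivative_at by blast
  have vdg': "\<And>t. vd gam t = g t" using dgam vector_derivative_at by blast
  have gn: "\<And>t. norm (g t) = 1" using unit vdg' by metis
  define N where "N = {t. \<not> (g has_vector_derivative h t) (at t)}"
  have negN: "negligible N" unfolding N_def by (rule LDT[OF Hh])
  have dg: "\<And>t. t \<notin> N \<Longrightarrow> (g has_vector_derivative h t) (at t)" by (auto simp: N_def)
  have gamg: "gam t \<bullet> g t = 0" for t
  proof -
    have d: "((\<lambda>s. gam s \<bullet> gam s) has_real_derivative (g t \<bullet> gam t + gam t \<bullet> g t)) (at t)"
      by (rule vd_inner2[OF dgam dgam])
    have "\<forall>y. \<bar>t - y\<bar> < 1 \<longrightarrow> gam y \<bullet> gam y \<le> gam t \<bullet> gam t" using sph by (simp add: norm_eq_1)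
    then have "g t \<bullet> gam t + gam t \<bullet> g t = 0" by (rule DERIV_local_max[OF d zero_less_one])
    then show ?thesis by (simp add: inner_commute)
  qed
  have gh: "g t \<bullet> h t = 0" if "t \<notin> N" for t
  proof -
    have d: "((\<lambda>s. g s \<bullet> g s) has_real_derivative (h t \<bullet> g t + g t \<bullet> h t)) (at t)"
      by (rule vd_inner2[OF dg[OF that] dg[OF that]])
    have "\<forall>y. \<bar>t - y\<bar> < 1 \<longrightarrow> g y \<bullet> g y \<le> g t \<bullet> g t" using gn by (simp add: norm_eq_1)
    then have "h t \<bullet> g t + g t \<bullet> h t = 0" by (rule DERIV_local_max[OF d zero_less_one])
    then show ?thesis by (simp add: inner_commute)
  qed
  have gamh: "gam t \<bullet> h t = -1" if "t \<notin> N" for t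
  proof -
    have d: "((\<lambda>s. gam s \<bullet> g s) has_real_derivative (g t \<bullet> g t + gam t \<bullet> h t)) (at t)"
      by (rule vd_inner2[OF dgam dg[OF that]])
    have "\<forall>y. \<bar>t - y\<bar> < 1 \<longrightarrow> gam y \<bullet> g y \<le> gam t \<bullet> g t" using gamg by simp
    then have "g t \<bullet> g t + gam t \<bullet> h t = 0" by (rule DERIV_local_max[OF d zero_less_one])
    moreover have "g t \<bullet> g t = 1" using gn by (simp add: norm_eq_1)
    ultimately show ?thesis by simp
  qed
  define n where "n = (\<lambda>t. cross3 (gam t) (g t))"
  have kap: "kappa gam t = h t \<bullet> n t" if "t \<notin> N" for t
  proof -
    have "vd (vd gam) t = h t" unfolding vdg using dg[OF that] by (rule vector_derivative_at)
    then show ?thesis unfolding kappa_def using unit by (simp add: vdg' n_def)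
  qed
  have diffN: "vd gam differentiable (at t)" if "t \<notin> N" for t
    unfolding vdg using dg[OF that] by (rule differentiableI_vector)
  have hdec: "h t \<bullet> x = - (gam t \<bullet> x) + (h t \<bullet> n t) * (n t \<bullet> x)" if "t \<notin> N" for t x
  proof -
    have "h t = (h t \<bullet> gam t) *\<^sub>R gam t + (h t \<bullet> g t) *\<^sub>R g t + (h t \<bullet> n t) *\<^sub>R n t"
      unfolding n_def by (rule frame_decomp[OF sph gn gamg])
    also have "\<dots> = - gam t + (h t \<bullet> n t) *\<^sub>R n t"
      using gamh[OF that] gh[OF that] by (simp add: inner_commute)
    finally have "h t \<bullet> x = (- gam t + (h t \<bullet> n t) *\<^sub>R n t) \<bullet> x" by simp
    then show ?thesis by (simp add: inner_add_left inner_diff_left)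
  qed
  have cnorm: "(gam t \<bullet> x)^2 + (g t \<bullet> x)^2 + (n t \<bullet> x)^2 = x \<bullet> x" for t x
    using frame_norm[OF sph gn gamg, of x] by (simp add: n_def inner_commute)
  define A where "A = (\<lambda>s. alp (ph s))"
  define R where "R = (\<lambda>s. sqrt (1 - (A s)^2))"
  have c1: "gam s $ 1 = R s * cos (ph s)" for s
    using par[rule_format, of s] by (simp add: circ_param_def A_def R_def)
  have c2: "gam s $ 2 = R s * sin (ph s)" for s
    using par[rule_format, of s] by (simp add: circ_param_def A_def R_def)
  have c3: "gam s $ 3 = A s" for s
    using par[rule_format, of s] by (simp add: circ_param_def A_def R_def)
  have Ageps: "A s \<ge> eps" for s using third[of s] c3[of s] by simp
  have Asq: "(A s)^2 \<le> 1" for s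
  proof -
    have "gam s \<bullet> gam s = 1" using sph by (simp add: norm_eq_1)
    then have "(gam s $ 1)^2 + (gam s $ 2)^2 + (gam s $ 3)^2 = 1"
      by (simp add: inner_vec_def sum_3 power2_eq_square)
    then have "(R s)^2 * ((cos (ph s))^2 + (sin (ph s))^2) + (A s)^2 = 1"
      unfolding c1 c2 c3 by (simp only: power_mult_distrib distrib_left)
    moreover have "(R s)^2 * ((cos (ph s))^2 + (sin (ph s))^2) = (R s)^2"
      unfolding sin_cos_squared_add2 by simp
    ultimately have "(R s)^2 + (A s)^2 = 1" by simp
    then show ?thesis by (smt (verit) zero_le_power2)
  qed
  have Rnn: "R s \<ge> 0" for s using Asq[of s] by (simp add: R_def)
  have Rsq: "(R s)^2 = 1 - (A s)^2" for s using Asq[of s] by (simp add: R_def)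
  have Ale1: "A s \<le> 1" for s using Asq[of s] abs_square_le_1 by (metis abs_le_D1)
  obtain sa where sa: "ph sa = a" using ph_onto[OF phc php[rule_format]] by blast
  obtain sb where sb: "ph sb = b" using ph_onto[OF phc php[rule_format]] by blast
  have sab: "sa < sb" using strict_mono_less[OF phm, of sa sb] sa sb ab(1) by simp
  have phin: "ph s \<in> {a<..<b} \<longleftrightarrow> s \<in> {sa<..<sb}" for s
    using strict_mono_less[OF phm, of sa s] strict_mono_less[OF phm, of s sb] sa sb by auto
  have phle: "ph s \<in> {a..b}" if "s \<in> {sa..sb}" for s
    using strict_mono_less_eq[OF phm, of sa s] strict_mono_less_eq[OF phm, of s sb] sa sb that by auto
  have Aa: "A sa = eps" using Ageps[of sa] ab(4) sa by (simp add: A_def)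
  have Ab: "A sb = eps" using Ageps[of sb] ab(5) sb by (simp add: A_def)
  have Ain: "A s > eps" if "s \<in> {sa<..<sb}" for s using ab(3) phin[of s] that by (simp add: A_def)
  define tm where "tm = (a + b) / 2"
  define cv where "cv = (\<lambda>\<tau>. (- sin \<tau> * cos tm) *\<^sub>R axis 1 1 + (- sin \<tau> * sin tm) *\<^sub>R axis 2 1 + cos \<tau> *\<^sub>R axis 3 (1::real) :: real^3)"
  define Q where "Q = (\<lambda>s \<tau>. gam s \<bullet> cv \<tau>)"
  have Qf: "Q s \<tau> = A s * cos \<tau> - sin \<tau> * (R s * cos (ph s - tm))" for s \<tau>
    by (simp add: Q_def cv_def inner_add_right inner_axis c1 c2 c3 cos_diff algebra_simps)
  have cosD: "cos (ph s - tm) > 0" if "s \<in> {sa..sb}" for s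
  proof -
    have "a \<le> ph s" "ph s \<le> b" using phle[OF that] by auto
    then show ?thesis using ab(2) unfolding tm_def by (intro cos_gt_zero_pi) (simp_all add: field_simps)
  qed
  have Qc: "continuous_on UNIV (\<lambda>p. Q (fst p) (snd p))"
    unfolding Q_def cv_def
    by (intro continuous_intros continuous_on_compose2[OF gamc continuous_on_fst]) auto
  define K where "K = ({sa..sb} \<times> {0..pi/2}) \<inter> {p. eps \<le> Q (fst p) (snd p)}"
  have compK: "compact K" unfolding K_def
    by (intro compact_Int_closed compact_Times compact_Icc closed_Collect_le continuous_on_const Qc)
  have K0: "(sa, 0) \<in> K" using sab Aa by (simp add: K_def Qf)
  obtain s0 tau where st0: "(s0,tau) \<in> K" and taumax: "\<And>p. p \<in> K \<Longrightarrow> snd p \<le> tau"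
  proof -
    have "compact (snd ` K)" by (rule compact_continuous_image[OF continuous_on_snd[OF continuous_on_id] compK])
    moreover have "snd ` K \<noteq> {}" using K0 by blast
    ultimately obtain t where "t \<in> snd ` K" "\<forall>y\<in>snd ` K. y \<le> t" using compact_attains_sup by metis
    then show ?thesis using that by force
  qed
  have Qisc: "isCont (\<lambda>\<tau>. Q s \<tau>) x" for s x
    unfolding Qf by (intro continuous_intros)
  have Qend: "Q s t < eps" if "s = sa \<or> s = sb" "0 < t" "t \<le> pi/2" for s t
  proof -
    have As: "A s = eps" using that Aa Ab by auto
    have r2: "(R s)^2 = 1 - eps^2" using Rsq[of s] As by simp
    have "eps * eps < 1 * 1" using eps by (intro mult_strict_mono) auto
    then have "eps^2 < 1" by (simp add: power2_eq_square)
    then have "R s \<noteq> 0" using r2 by auto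
    then have Rp: "R s > 0" using Rnn[of s] by simp
    have "s \<in> {sa..sb}" using that sab by auto
    then have "cos (ph s - tm) > 0" by (rule cosD)
    moreover have "sin t > 0" using that pi_gt_zero by (intro sin_gt_zero) auto
    ultimately have "sin t * (R s * cos (ph s - tm)) > 0" using Rp by simp
    moreover have "eps * cos t \<le> eps" using eps by (simp add: mult_left_le)
    ultimately show ?thesis unfolding Qf As by linarith
  qed
  have tau_pos: "tau > 0"
  proof -
    define s1 where "s1 = (sa + sb) / 2"
    have s1: "s1 \<in> {sa<..<sb}" using sab by (simp add: s1_def)
    have "Q s1 0 > eps" using Ain[OF s1] by (simp add: Qf)
    then obtain t where t: "0 < t" "t \<le> 0 + pi/2" "Q s1 t > eps"
      using right_above[OF Qisc[where s=s1 and x=0], of eps "pi/2"] by auto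
    then have "(s1, t) \<in> K" using s1 by (auto simp: K_def)
    then show ?thesis using taumax[of "(s1,t)"] t by simp
  qed
  have Qle: "Q s tau \<le> eps" if "s \<in> {sa..sb}" for s
  proof (rule ccontr)
    assume "\<not> ?thesis"
    then have "Q s tau > eps" by simp
    moreover have tle: "tau \<le> pi/2" using st0 by (simp add: K_def)
    moreover have "tau \<noteq> pi/2"
    proof
      assume t2: "tau = pi/2"
      have "Q s0 tau = - (R s0 * cos (ph s0 - tm))" unfolding Qf t2 by simp
      moreover have "s0 \<in> {sa..sb}" using st0 by (simp add: K_def)
      ultimately have "Q s0 tau \<le> 0" using Rnn[of s0] cosD[of s0] by simp
      then show False using st0 eps by (simp add: K_def)
    qed
    ultimately obtain t where t: "tau < t" "t \<le> tau + (pi/2 - tau)" "Q s t > eps"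
      using right_above[OF Qisc[where s=s and x=tau], of eps "pi/2 - tau"] by auto
    then have "(s, t) \<in> K" using that tau_pos by (auto simp: K_def)
    then show False using taumax[of "(s,t)"] t by simp
  qed
  have s0in: "s0 \<in> {sa<..<sb}"
  proof -
    have "s0 \<in> {sa..sb}" "tau \<le> pi/2" "eps \<le> Q s0 tau" using st0 by (auto simp: K_def)
    moreover have "s0 \<noteq> sa" "s0 \<noteq> sb" using Qend[of s0 tau] tau_pos \<open>tau \<le> pi/2\<close> \<open>eps \<le> Q s0 tau\<close> by auto
    ultimately show ?thesis by auto
  qed
  have Q0: "Q s0 tau = eps" using Qle[of s0] s0in st0 by (auto simp: K_def)
  define c where "c = cv tau"
  have cc: "c \<bullet> c = 1"
  proof -
    have e1: "c\<bullet>c = c$1*c$1 + c$2*c$2 + c$3*c$3" by (simp add: inner_vec_def sum_3)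
    have e2: "c$1 = - sin tau * cos tm" "c$2 = - sin tau * sin tm" "c$3 = cos tau" by (simp_all add: c_def cv_def axis_def)
    show ?thesis unfolding e1 e2 using sin_cos_squared_add3[of tau] sin_cos_squared_add3[of tm] by algebra
  qed
  have c3v: "c $ 3 = cos tau" by (simp add: c_def cv_def axis_def)
  define u where "u = (\<lambda>s. gam s \<bullet> c)"
  define v where "v = (\<lambda>s. g s \<bullet> c)"
  define w where "w = (\<lambda>s. n s \<bullet> c)"
  have du: "(u has_real_derivative v s) (at s)" for s unfolding u_def v_def by (rule vd_inner[OF dgam])
  have dv: "(v has_real_derivative (h s \<bullet> c)) (at s)" if "s \<notin> N" for s
    unfolding v_def by (rule vd_inner[OF dg[OF that]])
  have uQ: "u s = Q s tau" for s by (simp add: u_def Q_def c_def)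
  have ule: "u s \<le> eps" if "s \<in> {sa..sb}" for s using Qle[OF that] uQ by simp
  have u0: "u s0 = eps" using Q0 uQ by simp
  have uvw: "(u s)^2 + (v s)^2 + (w s)^2 = 1" for s
    using cnorm[of s c] cc by (simp add: u_def v_def w_def)
  have vbound: "\<bar>v s\<bar> \<le> 1" for s
  proof -
    have "(v s)^2 \<le> 1" using uvw[of s] by (smt (verit) zero_le_power2)
    then show ?thesis using abs_square_le_1 by blast
  qed
  have uc: "continuous_on UNIV u" unfolding u_def by (intro continuous_intros gamc)
  have vc: "continuous_on UNIV v" unfolding v_def by (intro continuous_intros gc)
  have wc: "continuous_on UNIV w" unfolding w_def n_def by (intro continuous_intros continuous_on_cross gamc gc)
  have locmax: "v s = 0" if "s \<in> {sa<..<sb}" "u s = eps" for s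
  proof -
    have dpos: "min (s - sa) (sb - s) > 0" using that by auto
    have "\<forall>y. \<bar>s - y\<bar> < min (s - sa) (sb - s) \<longrightarrow> u y \<le> u s"
    proof (intro allI impI)
      fix y assume "\<bar>s - y\<bar> < min (s - sa) (sb - s)"
      then have "y \<in> {sa..sb}" by (auto simp: abs_less_iff)
      then show "u y \<le> u s" using ule that by simp
    qed
    then show ?thesis by (rule DERIV_local_max[OF du dpos])
  qed
  have v0: "v s0 = 0" using locmax[OF s0in u0] .
  have phi: "\<And>x. isCont ph x" using phc by (simp add: continuous_on_eq_continuous_at)
  have dX: "((\<lambda>s. gam s $ 1) has_real_derivative g s $ 1) (at s)" for s
    using vd_inner[OF dgam[of s], where k="axis 1 1"] by (simp add: inner_axis)
  have dY: "((\<lambda>s. gam s $ 2) has_real_derivative g s $ 2) (at s)" for s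
    using vd_inner[OF dgam[of s], where k="axis 2 1"] by (simp add: inner_axis)
  have Alt1: "A s0 < 1"
  proof (rule ccontr)
    assume "\<not> A s0 < 1"
    then have A1: "A s0 = 1" using Ale1[of s0] by linarith
    then have R0: "R s0 = 0" by (simp add: R_def)
    have g12: "g s0 $ 1 = 0 \<and> g s0 $ 2 = 0"
      by (rule no_pole[where X="\<lambda>s. gam s $ 1" and Y="\<lambda>s. gam s $ 2" and R=R and ph=ph, OF c1 c2 Rnn phi R0 dX dY])
    have "gam s0 \<bullet> g s0 = gam s0 $ 1 * g s0 $ 1 + gam s0 $ 2 * g s0 $ 2 + gam s0 $ 3 * g s0 $ 3"
      by (simp add: inner_vec_def sum_3)
    then have g3: "g s0 $ 3 = 0" using gamg[of s0] g12 c3[of s0] A1 by simp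
    have "g s0 \<bullet> g s0 = g s0 $ 1 * g s0 $ 1 + g s0 $ 2 * g s0 $ 2 + g s0 $ 3 * g s0 $ 3"
      by (simp add: inner_vec_def sum_3)
    then have "g s0 \<bullet> g s0 = 0" using g12 g3 by simp
    then show False using gn[of s0] by (simp add: norm_eq_1)
  qed
  have p_nn: "gam s0 $ 1 * g s0 $ 2 - gam s0 $ 2 * g s0 $ 1 \<ge> 0"
    by (rule azim[where X="\<lambda>s. gam s $ 1" and Y="\<lambda>s. gam s $ 2" and R=R and ph=ph, OF c1 c2 Rnn phi phm dX dY])
  have n3: "n s0 $ 3 = gam s0 $ 1 * g s0 $ 2 - gam s0 $ 2 * g s0 $ 1" by (simp add: n_def cross3_def)
  have cdec: "c $ 3 = eps * A s0 + w s0 * n s0 $ 3"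
  proof -
    have "c = (c \<bullet> gam s0) *\<^sub>R gam s0 + (c \<bullet> g s0) *\<^sub>R g s0 + (c \<bullet> n s0) *\<^sub>R n s0"
      unfolding n_def by (rule frame_decomp[OF sph gn gamg])
    then have "c $ 3 = ((c \<bullet> gam s0) *\<^sub>R gam s0 + (c \<bullet> g s0) *\<^sub>R g s0 + (c \<bullet> n s0) *\<^sub>R n s0) $ 3"
      by (rule arg_cong[where f="\<lambda>x. x $ 3"])
    then have "c $ 3 = (c \<bullet> gam s0) * gam s0 $ 3 + (c \<bullet> g s0) * g s0 $ 3 + (c \<bullet> n s0) * n s0 $ 3"
      by (simp only: vector_add_component vector_scaleR_component real_scaleR_def)
    moreover have "c \<bullet> gam s0 = eps" "c \<bullet> g s0 = 0" "c \<bullet> n s0 = w s0"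
      using u0 v0 by (simp_all add: u_def v_def w_def inner_commute)
    ultimately show ?thesis using c3[of s0] by simp
  qed
  have As0p: "A s0 > 0" using Ageps[of s0] eps by linarith
  have Rs0: "R s0 > 0"
  proof -
    have "A s0 * A s0 < 1 * 1" using Alt1 As0p by (intro mult_strict_mono) auto
    then have "(R s0)^2 > 0" using Rsq[of s0] by (simp add: power2_eq_square)
    then show ?thesis using Rnn[of s0] by (metis less_eq_real_def power2_less_0 zero_less_power2)
  qed
  have costau: "cos tau - eps * A s0 > 0"
  proof -
    have "s0 \<in> {sa..sb}" using s0in by auto
    then have "cos (ph s0 - tm) > 0" by (rule cosD)
    moreover have tle: "tau \<le> pi/2" using st0 by (simp add: K_def)
    then have "sin tau > 0" using tau_pos pi_gt_zero by (intro sin_gt_zero) auto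
    ultimately have "sin tau * (R s0 * cos (ph s0 - tm)) > 0" using Rs0 by simp
    then have "A s0 * cos tau > eps" using Q0 unfolding Qf by linarith
    moreover have "eps * (A s0 * A s0) \<le> eps"
      using Alt1 As0p eps by (simp add: mult_le_one)
    ultimately have "A s0 * cos tau > A s0 * (eps * A s0)" by (simp add: algebra_simps)
    then show ?thesis using As0p by simp
  qed
  have w0: "w s0 > 0"
  proof (rule ccontr)
    assume "\<not> w s0 > 0"
    then have "w s0 * n s0 $ 3 \<le> 0" using p_nn n3 by (simp add: mult_nonpos_nonneg)
    then show False using costau cdec c3v by simp
  qed
  define rho where "rho = sqrt (1 - eps^2)"
  have eps2: "eps^2 < 1"
  proof -
    have "eps * eps < 1 * 1" using eps by (intro mult_strict_mono) auto
    then show ?thesis by (simp add: power2_eq_square)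
  qed
  have rho2: "rho^2 = 1 - eps^2" using eps2 by (simp add: rho_def)
  have rhop: "rho > 0" using eps2 by (simp add: rho_def)
  show ?thesis
  proof (rule ccontr)
    assume contra: "\<not> ?thesis"
    have kgt: "h s \<bullet> n s > eps / rho" if "s \<in> {sa<..<sb}" "s \<notin> N" for s
    proof -
      have "ph s \<in> {a<..<b}" using phin that by simp
      then have "\<not> kappa gam s \<le> eps / rho" using contra diffN[OF that(2)] unfolding rho_def by blast
      then show ?thesis using kap[OF that(2)] by simp
    qed
    define C where "C = eps / rho^2"
    have Cp: "C > 0" using eps rhop by (simp add: C_def)
    obtain d1 where d1: "d1 > 0" "\<And>y. \<bar>y - s0\<bar> < d1 \<Longrightarrow> \<bar>u y - u s0\<bar> < eps"
      using cont_small[where f=u and x=s0 and e=eps] uc eps by (auto simp: continuous_on_eq_continuous_at)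
    obtain d2 where d2: "d2 > 0" "\<And>y. \<bar>y - s0\<bar> < d2 \<Longrightarrow> \<bar>w y - w s0\<bar> < w s0"
      using cont_small[where f=w and x=s0 and e="w s0"] wc w0 by (auto simp: continuous_on_eq_continuous_at)
    define del where "del = min (min d1 d2) (min (sb - s0) (1 / C)) / 2"
    have delp: "del > 0" using d1 d2 s0in Cp by (simp add: del_def)
    have dd1: "del < d1" "del < d2" "del < sb - s0" using d1 d2 s0in Cp by (auto simp: del_def)
    have Cdel: "C * del < 1"
    proof -
      have M: "min (min d1 d2) (min (sb - s0) (1 / C)) \<le> 1 / C" by simp
      have Mp: "min (min d1 d2) (min (sb - s0) (1 / C)) > 0" using d1 d2 s0in Cp by simp
      have gen: "\<And>M k::real. M \<le> k \<Longrightarrow> 0 < M \<Longrightarrow> M / 2 < k" by linarith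
      have "del < 1 / C" unfolding del_def using gen[OF M Mp] .
      then show ?thesis using Cp by (simp add: field_simps)
    qed
    have yin: "y \<in> {sa<..<sb}" if "y \<in> {s0..s0+del}" for y using that s0in dd1 by auto
    have upos: "u y > 0" if "y \<in> {s0..s0+del}" for y
      using d1(2)[of y] that dd1 u0 by (auto simp: abs_less_iff)
    have wpos: "w y > 0" if "y \<in> {s0..s0+del}" for y
      using d2(2)[of y] that dd1 by (auto simp: abs_less_iff)
    have bnd: "h s \<bullet> c \<ge> - C * (v s)^2" if sd: "s \<in> {s0..s0+del}" and sN: "s \<notin> N" for s
    proof -
      have hc: "h s \<bullet> c = - u s + (h s \<bullet> n s) * w s" using hdec[OF sN, of c] by (simp add: u_def w_def)
      have k: "h s \<bullet> n s > eps / rho" using kgt[OF yin[OF sd] sN] .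
      have wp: "w s > 0" using wpos[OF sd] .
      have up: "u s > 0" "u s \<le> eps" using upos[OF sd] ule yin[OF sd] by auto
      have kw: "(h s \<bullet> n s) * w s \<ge> (eps / rho) * w s" using mult_right_mono[OF less_imp_le[OF k] less_imp_le[OF wp]] .
      have key: "rho * w s - rho^2 + (v s)^2 \<ge> 0"
      proof (cases "w s \<ge> rho")
        case True
        then have "rho * w s \<ge> rho * rho" using rhop by (simp add: mult_left_mono)
        then show ?thesis by (simp add: power2_eq_square)
      next
        case False
        have "(u s)^2 \<le> eps^2" using up by (simp add: power_mono)
        moreover have "w s * (rho - w s) \<ge> 0" using False wp by simp
        ultimately show ?thesis using uvw[of s] rho2 by (simp add: algebra_simps power2_eq_square)
      qed
      have "- eps + (eps / rho) * w s + C * (v s)^2 = (eps / rho^2) * (rho * w s - rho^2 + (v s)^2)"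
        using rhop by (simp add: C_def field_simps power2_eq_square)
      also have "\<dots> \<ge> 0" using key eps rhop by simp
      finally have "- eps + (eps / rho) * w s + C * (v s)^2 \<ge> 0" .
      then show ?thesis using hc kw up by linarith
    qed
    have Vnn: "v t \<ge> 0" if t: "t \<in> {s0..s0+del}" for t
    proof (rule ccontr)
      assume "\<not> v t \<ge> 0"
      then have vt: "v t < 0" by simp
      have "s0 \<le> t" using t by simp
      then obtain t' where t': "t' \<in> {s0..t}" "\<And>y. y \<in> {s0..t} \<Longrightarrow> v t' \<le> v y"
        using continuous_attains_inf[of "{s0..t}" v] vc continuous_on_subset[of UNIV v "{s0..t}"] by auto
      define m where "m = v t'"
      have mneg: "m < 0" using t'(2)[of t] \<open>s0 \<le> t\<close> vt by (simp add: m_def)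
      define Z where "Z = {s0..t'} \<inter> {s. 0 \<le> v s}"
      have Zc: "closed Z" unfolding Z_def
        by (intro closed_Int closed_atLeastAtMost closed_Collect_le continuous_on_const vc)
      have Zne: "s0 \<in> Z" using v0 t' by (auto simp: Z_def)
      have Zb: "bdd_above Z" unfolding Z_def by (rule bdd_above_Int1) simp
      define t0 where "t0 = Sup Z"
      have t0Z: "t0 \<in> Z" unfolding t0_def using Zne Zb Zc by (intro closed_contains_Sup) auto
      have t0le: "s0 \<le> t0" "t0 \<le> t'" "v t0 \<ge> 0" using t0Z by (auto simp: Z_def)
      have t0lt: "t0 < t'" using t0le mneg m_def by (cases "t0 = t'") auto
      have negpart: "v s < 0" if st: "s \<in> {t0<..t'}" for s
      proof (rule ccontr)
        assume "\<not> v s < 0"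
        then have "s \<in> Z" using st t0le by (auto simp: Z_def)
        then have "s \<le> t0" unfolding t0_def using Zb by (rule cSup_upper)
        then show False using st by simp
      qed
      have int1: "((\<lambda>s. h s \<bullet> c) has_integral (v t' - v t0)) {t0..t'}"
      proof -
        have "(h has_integral (g t' - g t0)) {t0..t'}" using Hh t0le by simp
        from has_integral_linear[OF this bounded_linear_inner_left[of c]]
        show ?thesis by (simp add: o_def v_def inner_diff_left)
      qed
      define q where "q = (\<lambda>s. if s \<in> N \<union> {t0} then - C * m^2 else h s \<bullet> c)"
      have negN0: "negligible (N \<union> {t0})" using negN by (simp add: negligible_Un)
      have int2: "(q has_integral (v t' - v t0)) {t0..t'}"
        by (rule has_integral_spike[OF negN0 _ int1]) (simp add: q_def)
      have qlb: "- C * m^2 \<le> q s" if sI: "s \<in> {t0..t'}" for s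
      proof (cases "s \<in> N \<union> {t0}")
        case True then show ?thesis by (simp add: q_def)
      next
        case False
        then have sN: "s \<notin> N" and st: "s \<in> {t0<..t'}" using sI by auto
        have "s \<in> {s0..s0+del}" using st t0le t'(1) t by auto
        then have b1: "h s \<bullet> c \<ge> - C * (v s)^2" using bnd sN by blast
        have "s \<in> {s0..t}" using st t0le t'(1) by auto
        then have "m \<le> v s" using t'(2) by (simp add: m_def)
        moreover have "v s < 0" using negpart[OF st] .
        ultimately have "(- v s)^2 \<le> (- m)^2" by (intro power_mono) auto
        then have "(v s)^2 \<le> m^2" by simp
        then have "C * (v s)^2 \<le> C * m^2" using Cp by (simp add: mult_left_mono)
        then show ?thesis using b1 False by (simp add: q_def)
      qed
      have ci: "((\<lambda>s. - C * m^2) has_integral ((t' - t0) * (- C * m^2))) {t0..t'}"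
        using has_integral_const_real[of "- C * m^2" t0 t'] t0lt by simp
      have "(t' - t0) * (- C * m^2) \<le> v t' - v t0"
        by (rule has_integral_le[OF ci int2 qlb])
      then have L: "C * m^2 * (t' - t0) \<ge> - m" using t0le by (simp add: m_def algebra_simps)
      have "C * (- m) * (t' - t0) * (- m) \<ge> 1 * (- m)" using L by (simp add: power2_eq_square algebra_simps)
      then have L2: "C * (- m) * (t' - t0) \<ge> 1" using mneg by (simp only: mult_le_cancel_right)
      have "- m \<le> 1" using vbound[of t'] by (simp add: m_def abs_le_iff)
      moreover have "t' - t0 \<le> del" using t0le t'(1) t by auto
      ultimately have "C * (- m) * (t' - t0) \<le> C * 1 * del"
        using Cp mneg t0lt by (intro mult_mono) auto
      then show False using L2 Cdel by simp
    qed
    have uconst: "u s = eps" if sd: "s \<in> {s0..s0+del}" for s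
    proof -
      have "u s0 \<le> u s"
        apply (rule DERIV_nonneg_imp_increasing_open[of s0 s u])
        using sd apply simp
        subgoal for x using du[of x] Vnn[of x] sd by auto
        using uc continuous_on_subset apply blast
        done
      moreover have "u s \<le> eps" using ule yin[OF sd] by auto
      ultimately show ?thesis using u0 by simp
    qed
    obtain s1 where s1: "s1 \<in> {s0<..<s0+del}" "s1 \<notin> N"
    proof -
      have "\<not> {s0<..<s0+del} \<subseteq> N"
      proof
        assume "{s0<..<s0+del} \<subseteq> N"
        then have "negligible (box s0 (s0+del))" using negN negligible_subset by (metis box_real(1))
        moreover have "box s0 (s0+del) \<noteq> {}" using delp by (simp add: box_real)
        ultimately show False using negligible_interval(2) by blast
      qed
      then show ?thesis using that by blast
    qed
    have vz: "v y = 0" if "y \<in> {s0<..<s0+del}" for y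
      using locmax[of y] uconst[of y] yin[of y] that by auto
    have hc0: "h s1 \<bullet> c = 0"
    proof -
      define dd where "dd = min (s1 - s0) (s0 + del - s1)"
      have ddp: "dd > 0" using s1 by (simp add: dd_def)
      have "\<forall>y. \<bar>s1 - y\<bar> < dd \<longrightarrow> v y \<le> v s1"
      proof (intro allI impI)
        fix y assume "\<bar>s1 - y\<bar> < dd"
        then have "y \<in> {s0<..<s0+del}" by (auto simp: dd_def abs_less_iff)
        then show "v y \<le> v s1" using vz s1 by simp
      qed
      then show ?thesis by (rule DERIV_local_max[OF dv[OF s1(2)] ddp])
    qed
    have s1d: "s1 \<in> {s0..s0+del}" using s1 by auto
    have ws1: "w s1 = rho"
    proof -
      have "(w s1)^2 = rho^2" using uvw[of s1] uconst[OF s1d] vz[OF s1(1)] rho2 by simp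
      then show ?thesis using wpos[OF s1d] rhop by (simp add: power2_eq_iff_nonneg)
    qed
    have "h s1 \<bullet> c = - eps + (h s1 \<bullet> n s1) * rho"
      using hdec[OF s1(2), of c] uconst[OF s1d] ws1 by (simp add: u_def w_def)
    then have "(h s1 \<bullet> n s1) * rho = eps" using hc0 by simp
    then have "h s1 \<bullet> n s1 = eps / rho" using rhop by (simp add: field_simps)
    then show False using kgt[OF yin[OF s1d] s1(2)] by simp
  qed
qed
theorem lemma3p3:
  shows "\<exists>\<epsilon>0>0. \<forall>\<epsilon> (\<gamma>::real \<Rightarrow> real^3) (\<alpha>::real \<Rightarrow> real) (\<phi>::real \<Rightarrow> real) a b.
     0 < \<epsilon> \<and> \<epsilon> < \<epsilon>0 \<and>
     \<gamma> \<in> Ytilde \<epsilon> \<and> (\<forall>\<eta>\<in>Ytilde \<epsilon>. F \<gamma> \<le> F \<eta>) \<and>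
     (\<forall>t. norm (vd \<gamma> t) = 1) \<and>
     (\<forall>\<theta>. \<alpha> (\<theta> + 2*pi) = \<alpha> \<theta>) \<and>
     continuous_on UNIV \<phi> \<and> strict_mono \<phi> \<and> (\<forall>s. \<phi> (s + 2*pi) = \<phi> s + 2*pi) \<and>
     (\<forall>s. \<gamma> s = circ_param \<alpha> (\<phi> s)) \<and>
     a < b \<and> b - a < pi \<and> (\<forall>\<theta>\<in>{a<..<b}. \<alpha> \<theta> > \<epsilon>) \<and> \<not> (\<alpha> a > \<epsilon>) \<and> \<not> (\<alpha> b > \<epsilon>)
     \<longrightarrow> (\<exists>s. \<phi> s \<in> {a<..<b} \<and> vd \<gamma> differentiable (at s) \<and>
              kappa \<gamma> s \<le> \<epsilon> / sqrt (1 - \<epsilon>^2))"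
proof (rule exI[of _ "1/2"], intro conjI allI impI)
  show "(0::real) < 1/2" by simp
next
  fix \<epsilon> :: real and \<gamma> :: "real \<Rightarrow> real^3" and \<alpha> \<phi> :: "real \<Rightarrow> real" and a b :: real
  assume H: "0 < \<epsilon> \<and> \<epsilon> < 1/2 \<and>
     \<gamma> \<in> Ytilde \<epsilon> \<and> (\<forall>\<eta>\<in>Ytilde \<epsilon>. F \<gamma> \<le> F \<eta>) \<and>
     (\<forall>t. norm (vd \<gamma> t) = 1) \<and>
     (\<forall>\<theta>. \<alpha> (\<theta> + 2*pi) = \<alpha> \<theta>) \<and>
     continuous_on UNIV \<phi> \<and> strict_mono \<phi> \<and> (\<forall>s. \<phi> (s + 2*pi) = \<phi> s + 2*pi) \<and>
     (\<forall>s. \<gamma> s = circ_param \<alpha> (\<phi> s)) \<and>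
     a < b \<and> b - a < pi \<and> (\<forall>\<theta>\<in>{a<..<b}. \<alpha> \<theta> > \<epsilon>) \<and> \<not> (\<alpha> a > \<epsilon>) \<and> \<not> (\<alpha> b > \<epsilon>)"
  show "\<exists>s. \<phi> s \<in> {a<..<b} \<and> vd \<gamma> differentiable (at s) \<and> kappa \<gamma> s \<le> \<epsilon> / sqrt (1 - \<epsilon>^2)"
    by (rule main) (use H in auto)
qed

end
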